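(* Let $S_n(t)=\sum_{\pi\in\mathfrak{S}_n(2413,3142)}t^{\mathrm{des}(\pi)}$ for $n\ge1$. For $n\geq2$, $$S_n(t)=(1+t)S_{n-1}(t)+t\sum_{j=1}^{n-2}S_j(t)\biggl(S_{n-j-1}(t)+\sum_{i=1}^{n-j-1}S_i(t)S_{n-j-i}(t)\biggr).$$ Equivalently, $S(t,z):=\sum_{n\geq1}S_n(t)z^n$ satisfies $$S(t,z)=z+(1+t)zS(t,z)+tzS^2(t,z)+tS^3(t,z).$$
   Context: $\mathfrak{S}_n(2413,3142)$ is the set of permutations of $[n]$ avoiding the patterns $2413$ and $3142$ (no subsequence has the same relative order as $2413$ or $3142$); $\mathrm{des}(\pi)=\#\{i\in[n-1]:\pi_i>\pi_{i+1}\}$. *)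

theory Defs
  imports "HOL-Computational_Algebra.Polynomial" "HOL-Computational_Algebra.Formal_Power_Series"
begin

(* permutations of [n] in one-line notation: lists pi with pi ! (i-1) = pi_i *)
definition perms :: "nat \<Rightarrow> nat list set" where
  "perms n = {xs. distinct xs \<and> set xs = {1..n}}"

definition contains :: "nat list \<Rightarrow> nat list \<Rightarrow> bool" where
  "contains xs p \<longleftrightarrow> (\<exists>idx :: nat list. length idx = length p \<and> sorted_wrt (<) idx
      \<and> (\<forall>j\<in>set idx. j < length xs)
      \<and> (\<forall>a<length p. \<forall>b<length p. (xs ! (idx ! a) < xs ! (idx ! b)) \<longleftrightarrow> (p ! a < p ! b)))"

definition avoid_perms :: "nat \<Rightarrow> nat list set" where
  "avoid_perms n = {xs \<in> perms n. \<not> contains xs [2,4,1,3] \<and> \<not> contains xs [3,1,4,2]}"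

definition des :: "nat list \<Rightarrow> nat" where
  "des xs = card {i. i + 1 < length xs \<and> xs ! i > xs ! (i + 1)}"

definition S :: "nat \<Rightarrow> int poly" where
  "S n = (\<Sum>xs\<in>avoid_perms n. monom 1 (des xs))"

definition Sgf :: "int poly fps" where
  "Sgf = Abs_fps (\<lambda>n. if n = 0 then 0 else S n)"

end

theory Submission
  imports Defs
begin

unbundle fps_syntax


definition p2413 :: "nat \<Rightarrow> nat \<Rightarrow> nat \<Rightarrow> nat \<Rightarrow> bool" where
  "p2413 a b c d \<longleftrightarrow> c < a \<and> a < d \<and> d < b"
definition p3142 :: "nat \<Rightarrow> nat \<Rightarrow> nat \<Rightarrow> nat \<Rightarrow> bool" where
  "p3142 a b c d \<longleftrightarrow> b < d \<and> d < a \<and> a < c"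
definition hasp :: "(nat\<Rightarrow>nat\<Rightarrow>nat\<Rightarrow>nat\<Rightarrow>bool) \<Rightarrow> nat list \<Rightarrow> bool" where
  "hasp P xs \<longleftrightarrow> (\<exists>i j k l. i<j \<and> j<k \<and> k<l \<and> l<length xs \<and> P (xs!i) (xs!j) (xs!k) (xs!l))"

lemma four_cases: "(a::nat) < 4 \<longleftrightarrow> a = 0 \<or> a = 1 \<or> a = 2 \<or> a = 3" by auto

lemma contains4:
  assumes "length p = 4" "distinct p"
  shows "contains xs p \<longleftrightarrow> (\<exists>i j k l. i<j \<and> j<k \<and> k<l \<and> l<length xs \<and>
     (\<forall>a<4. \<forall>b<4. (xs ! ([i,j,k,l] ! a) < xs ! ([i,j,k,l] ! b)) \<longleftrightarrow> (p ! a < p ! b)))"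
proof
  assume "contains xs p"
  then obtain idx where L: "length idx = 4" and s: "sorted_wrt (<) idx" and b: "\<forall>j\<in>set idx. j < length xs"
    and c: "\<forall>a<4. \<forall>b<4. (xs ! (idx ! a) < xs ! (idx ! b)) \<longleftrightarrow> (p ! a < p ! b)"
    unfolding contains_def using assms by auto
  have e: "idx = [idx!0, idx!1, idx!2, idx!3]" using L
    by (simp add: numeral_eq_Suc length_Suc_conv, metis nth_Cons_0 nth_Cons_Suc)
  show "\<exists>i j k l. i<j \<and> j<k \<and> k<l \<and> l<length xs \<and>
     (\<forall>a<4. \<forall>b<4. (xs ! ([i,j,k,l] ! a) < xs ! ([i,j,k,l] ! b)) \<longleftrightarrow> (p ! a < p ! b))"
    apply (rule exI[of _ "idx!0"], rule exI[of _ "idx!1"], rule exI[of _ "idx!2"], rule exI[of _ "idx!3"])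
    using s L b c e by (auto simp: sorted_wrt_iff_nth_less)
next
  assume "\<exists>i j k l. i<j \<and> j<k \<and> k<l \<and> l<length xs \<and>
     (\<forall>a<4. \<forall>b<4. (xs ! ([i,j,k,l] ! a) < xs ! ([i,j,k,l] ! b)) \<longleftrightarrow> (p ! a < p ! b))"
  then obtain i j k l where h: "i<j" "j<k" "k<l" "l<length xs" and
     c: "\<forall>a<4. \<forall>b<4. (xs ! ([i,j,k,l] ! a) < xs ! ([i,j,k,l] ! b)) \<longleftrightarrow> (p ! a < p ! b)" by blast
  show "contains xs p" unfolding contains_def
    apply (rule exI[of _ "[i,j,k,l]"]) using h c assms by auto
qed

lemma all4: "(\<forall>a<(4::nat). P a) \<longleftrightarrow> P 0 \<and> P 1 \<and> P 2 \<and> P 3"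
  by (auto simp: numeral_eq_Suc less_Suc_eq)

lemma c2413: "contains xs [2,4,1,3] \<longleftrightarrow> hasp p2413 xs"
proof -
  have e: "(\<forall>a<4. \<forall>b<4. (xs ! ([i,j,k,l] ! a) < xs ! ([i,j,k,l] ! b)) \<longleftrightarrow> ([2,4,1,3::nat] ! a < [2,4,1,3::nat] ! b))
   \<longleftrightarrow> p2413 (xs!i) (xs!j) (xs!k) (xs!l)" for i j k l
    unfolding all4 p2413_def by simp linarith
  have c: "contains xs [2,4,1,3] \<longleftrightarrow> (\<exists>i j k l. i<j \<and> j<k \<and> k<l \<and> l<length xs \<and>
     (\<forall>a<4. \<forall>b<4. (xs ! ([i,j,k,l] ! a) < xs ! ([i,j,k,l] ! b)) \<longleftrightarrow> ([2,4,1,3::nat] ! a < [2,4,1,3::nat] ! b)))"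
    by (rule contains4) auto
  show ?thesis unfolding c e hasp_def by (rule refl)
qed

lemma c3142: "contains xs [3,1,4,2] \<longleftrightarrow> hasp p3142 xs"
proof -
  have e: "(\<forall>a<4. \<forall>b<4. (xs ! ([i,j,k,l] ! a) < xs ! ([i,j,k,l] ! b)) \<longleftrightarrow> ([3,1,4,2::nat] ! a < [3,1,4,2::nat] ! b))
   \<longleftrightarrow> p3142 (xs!i) (xs!j) (xs!k) (xs!l)" for i j k l
    unfolding all4 p3142_def by simp linarith
  have c: "contains xs [3,1,4,2] \<longleftrightarrow> (\<exists>i j k l. i<j \<and> j<k \<and> k<l \<and> l<length xs \<and>
     (\<forall>a<4. \<forall>b<4. (xs ! ([i,j,k,l] ! a) < xs ! ([i,j,k,l] ! b)) \<longleftrightarrow> ([3,1,4,2::nat] ! a < [3,1,4,2::nat] ! b)))"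
    by (rule contains4) auto
  show ?thesis unfolding c e hasp_def by (rule refl)
qed

definition av :: "nat list \<Rightarrow> bool" where
  "av xs \<longleftrightarrow> \<not> hasp p2413 xs \<and> \<not> hasp p3142 xs"

lemma avoid_perms_av: "avoid_perms n = {xs \<in> perms n. av xs}"
  unfolding avoid_perms_def av_def c2413 c3142 by simp

lemma hasp_take: assumes "hasp P (take k xs)" shows "hasp P xs"
proof -
  obtain i j l m where h: "i<j" "j<l" "l<m" "m<length (take k xs)"
     "P (take k xs!i) (take k xs!j) (take k xs!l) (take k xs!m)"
    using assms unfolding hasp_def by blast
  show ?thesis unfolding hasp_def
    apply (rule exI[of _ "i"], rule exI[of _ "j"], rule exI[of _ "l"], rule exI[of _ "m"])
    using h by auto
qed

lemma hasp_drop: assumes "hasp P (drop k xs)" shows "hasp P xs"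
proof -
  obtain i j l m where h: "i<j" "j<l" "l<m" "m<length (drop k xs)"
     "P (drop k xs!i) (drop k xs!j) (drop k xs!l) (drop k xs!m)"
    using assms unfolding hasp_def by blast
  show ?thesis unfolding hasp_def
    apply (rule exI[of _ "k+i"], rule exI[of _ "k+j"], rule exI[of _ "k+l"], rule exI[of _ "k+m"])
    using h by auto
qed

lemma av_take: "av xs \<Longrightarrow> av (take k xs)" unfolding av_def using hasp_take by blast
lemma av_drop: "av xs \<Longrightarrow> av (drop k xs)" unfolding av_def using hasp_drop by blast

lemma hasp_map:
  assumes "\<forall>a\<in>set xs. \<forall>b\<in>set xs. f a < f b \<longleftrightarrow> a < b"
    and "P = p2413 \<or> P = p3142"
  shows "hasp P (map f xs) \<longleftrightarrow> hasp P xs"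
proof -
  have hh: "P (map f xs!i) (map f xs!j) (map f xs!k) (map f xs!l) \<longleftrightarrow> P (xs!i) (xs!j) (xs!k) (xs!l)"
    if "i<j" "j<k" "k<l" "l<length xs" for i j k l
  proof -
    have m: "xs!i \<in> set xs" "xs!j \<in> set xs" "xs!k \<in> set xs" "xs!l \<in> set xs" using that by auto
    have r: "\<And>a b. a\<in>set xs \<Longrightarrow> b\<in>set xs \<Longrightarrow> f a < f b \<longleftrightarrow> a < b" using assms(1) by blast
    from assms(2) show ?thesis
    proof
      assume "P = p2413" then show ?thesis using that by (simp add: p2413_def r m)
    next
      assume "P = p3142" then show ?thesis using that by (simp add: p3142_def r m)
    qed
  qed
  show ?thesis unfolding hasp_def length_map using hh by blast
qed

lemma av_map:
  assumes "\<forall>a\<in>set xs. \<forall>b\<in>set xs. f a < f b \<longleftrightarrow> a < b"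
  shows "av (map f xs) \<longleftrightarrow> av xs"
  unfolding av_def using hasp_map[OF assms] by blast

lemma hasp_append_cases:
  assumes "hasp P (xs@ys)"
  shows "hasp P xs \<or> hasp P ys \<or> (\<exists>a b c d. P a b c d \<and>
     ((a\<in>set xs \<and> b\<in>set ys \<and> c\<in>set ys \<and> d\<in>set ys) \<or>
      (a\<in>set xs \<and> b\<in>set xs \<and> c\<in>set ys \<and> d\<in>set ys) \<or>
      (a\<in>set xs \<and> b\<in>set xs \<and> c\<in>set xs \<and> d\<in>set ys)))"
proof -
  obtain i j k l where h: "i<j" "j<k" "k<l" "l<length (xs@ys)"
     and p: "P ((xs@ys)!i) ((xs@ys)!j) ((xs@ys)!k) ((xs@ys)!l)"
    using assms unfolding hasp_def by blast
  let ?n = "length xs"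
  consider "l < ?n" | "?n \<le> i" | "i < ?n" "?n \<le> j" | "j < ?n" "?n \<le> k" | "k < ?n" "?n \<le> l"
    by linarith
  then show ?thesis
  proof cases
    case 1
    then have "hasp P xs" unfolding hasp_def using h p
      apply (rule_tac x="i" in exI, rule_tac x="j" in exI,
             rule_tac x="k" in exI, rule_tac x="l" in exI)
      by (auto simp: nth_append)
    then show ?thesis by blast
  next
    case 2
    then have "hasp P ys" unfolding hasp_def
      apply (rule_tac x="i - ?n" in exI, rule_tac x="j - ?n" in exI,
             rule_tac x="k - ?n" in exI, rule_tac x="l - ?n" in exI)
      using h p by (auto simp: nth_append)
    then show ?thesis by blast
  next
    case 3
    then show ?thesis using h p
      by (intro disjI2, rule_tac x="(xs@ys)!i" in exI, rule_tac x="(xs@ys)!j" in exI,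
          rule_tac x="(xs@ys)!k" in exI, rule_tac x="(xs@ys)!l" in exI) (auto simp: nth_append)
  next
    case 4
    then show ?thesis using h p
      by (intro disjI2, rule_tac x="(xs@ys)!i" in exI, rule_tac x="(xs@ys)!j" in exI,
          rule_tac x="(xs@ys)!k" in exI, rule_tac x="(xs@ys)!l" in exI) (auto simp: nth_append)
  next
    case 5
    then show ?thesis using h p
      by (intro disjI2, rule_tac x="(xs@ys)!i" in exI, rule_tac x="(xs@ys)!j" in exI,
          rule_tac x="(xs@ys)!k" in exI, rule_tac x="(xs@ys)!l" in exI) (auto simp: nth_append)
  qed
qed

lemma av_append_less:
  assumes "av xs" "av ys" "\<forall>a\<in>set xs. \<forall>b\<in>set ys. a < b"
  shows "av (xs@ys)"
proof -
  have "\<not> hasp p2413 (xs@ys)"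
  proof
    assume "hasp p2413 (xs@ys)"
    from hasp_append_cases[OF this] assms(1,2) obtain a b c d where "p2413 a b c d"
      "((a\<in>set xs \<and> b\<in>set ys \<and> c\<in>set ys \<and> d\<in>set ys) \<or>
      (a\<in>set xs \<and> b\<in>set xs \<and> c\<in>set ys \<and> d\<in>set ys) \<or>
      (a\<in>set xs \<and> b\<in>set xs \<and> c\<in>set xs \<and> d\<in>set ys))" unfolding av_def by blast
    then show False using assms(3) unfolding p2413_def by (auto dest: less_asym)
  qed
  moreover have "\<not> hasp p3142 (xs@ys)"
  proof
    assume "hasp p3142 (xs@ys)"
    from hasp_append_cases[OF this] assms(1,2) obtain a b c d where "p3142 a b c d"
      "((a\<in>set xs \<and> b\<in>set ys \<and> c\<in>set ys \<and> d\<in>set ys) \<or>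
      (a\<in>set xs \<and> b\<in>set xs \<and> c\<in>set ys \<and> d\<in>set ys) \<or>
      (a\<in>set xs \<and> b\<in>set xs \<and> c\<in>set xs \<and> d\<in>set ys))" unfolding av_def by blast
    then show False using assms(3) unfolding p3142_def by (auto dest: less_asym)
  qed
  ultimately show ?thesis unfolding av_def by blast
qed

lemma av_append_greater:
  assumes "av xs" "av ys" "\<forall>a\<in>set xs. \<forall>b\<in>set ys. a > b"
  shows "av (xs@ys)"
proof -
  have "\<not> hasp p2413 (xs@ys)"
  proof
    assume "hasp p2413 (xs@ys)"
    from hasp_append_cases[OF this] assms(1,2) obtain a b c d where "p2413 a b c d"
      "((a\<in>set xs \<and> b\<in>set ys \<and> c\<in>set ys \<and> d\<in>set ys) \<or>
      (a\<in>set xs \<and> b\<in>set xs \<and> c\<in>set ys \<and> d\<in>set ys) \<or>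
      (a\<in>set xs \<and> b\<in>set xs \<and> c\<in>set xs \<and> d\<in>set ys))" unfolding av_def by blast
    then show False using assms(3) unfolding p2413_def by (auto dest: less_asym)
  qed
  moreover have "\<not> hasp p3142 (xs@ys)"
  proof
    assume "hasp p3142 (xs@ys)"
    from hasp_append_cases[OF this] assms(1,2) obtain a b c d where "p3142 a b c d"
      "((a\<in>set xs \<and> b\<in>set ys \<and> c\<in>set ys \<and> d\<in>set ys) \<or>
      (a\<in>set xs \<and> b\<in>set xs \<and> c\<in>set ys \<and> d\<in>set ys) \<or>
      (a\<in>set xs \<and> b\<in>set xs \<and> c\<in>set xs \<and> d\<in>set ys))" unfolding av_def by blast
    then show False using assms(3) unfolding p3142_def by (auto dest: less_asym)
  qed
  ultimately show ?thesis unfolding av_def by blast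
qed



definition psplit :: "nat list \<Rightarrow> nat \<Rightarrow> bool" where
  "psplit xs k \<longleftrightarrow> 0 < k \<and> k < length xs \<and> (\<forall>i<k. \<forall>j. k \<le> j \<and> j < length xs \<longrightarrow> xs!i < xs!j)"
definition msplit :: "nat list \<Rightarrow> nat \<Rightarrow> bool" where
  "msplit xs k \<longleftrightarrow> 0 < k \<and> k < length xs \<and> (\<forall>i<k. \<forall>j. k \<le> j \<and> j < length xs \<longrightarrow> xs!i > xs!j)"

lemma split_step:
  assumes d: "distinct (ys@[x])" and a: "av (ys@[x])" and s: "psplit ys k \<or> msplit ys k"
  shows "\<exists>k. psplit (ys@[x]) k \<or> msplit (ys@[x]) k"
proof -
  let ?n = "length ys"
  have nx: "\<And>i. i < ?n \<Longrightarrow> ys!i \<noteq> x" using d by (auto simp: nth_mem)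
  have ap: "\<not> hasp p2413 (ys@[x])" "\<not> hasp p3142 (ys@[x])" using a unfolding av_def by auto
  from s show ?thesis
  proof
    assume ps: "psplit ys k"
    hence k: "0 < k" "k < ?n" and lt: "\<And>i j. i<k \<Longrightarrow> k \<le> j \<Longrightarrow> j < ?n \<Longrightarrow> ys!i < ys!j"
      unfolding psplit_def by auto
    show ?thesis
    proof (cases "\<forall>i<k. ys!i < x")
      case True
      have "psplit (ys@[x]) k" unfolding psplit_def using k True lt
        by (auto simp: nth_append)
      then show ?thesis by blast
    next
      case F1: False
      then obtain i0 where i0: "i0 < k" "ys!i0 > x" using nx k by (meson linorder_neqE_nat order.strict_trans)
      show ?thesis
      proof (cases "\<forall>i<k. ys!i > x")
        case True
        have "msplit (ys@[x]) ?n" unfolding msplit_def using k True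
          by (auto simp: nth_append) (metis lt not_less order.strict_trans)
        then show ?thesis by blast
      next
        case False
        then obtain i1 where i1: "i1 < k" "ys!i1 < x" using nx k
          by (meson linorder_neqE_nat order.strict_trans)
        define k' where "k' = (LEAST i. i < k \<and> ys!i > x)"
        have k'1: "k' < k" "ys!k' > x" using LeastI[of "\<lambda>i. i < k \<and> ys!i > x" i0] i0 unfolding k'_def by auto
        have k'2: "\<And>i. i < k' \<Longrightarrow> ys!i < x"
          using not_less_Least[of _ "\<lambda>i. i < k \<and> ys!i > x"] nx k'1 k unfolding k'_def
          by (metis linorder_neqE_nat order.strict_trans)
        have k'3: "ys!j > x" if "k' \<le> j" "j < k" for j
        proof (rule ccontr)
          assume "\<not> ys!j > x"
          hence "ys!j < x" using nx that k by (meson linorder_neqE_nat order.strict_trans)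
          moreover have "j \<noteq> k'" using k'1 calculation by auto
          ultimately have "hasp p3142 (ys@[x])" unfolding hasp_def p3142_def
            apply (rule_tac x=k' in exI, rule_tac x=j in exI, rule_tac x=k in exI, rule_tac x="?n" in exI)
            using that k k'1 lt[of k' k] by (auto simp: nth_append)
          then show False using ap by blast
        qed
        have "k' > 0" using k'2 k'3 i1 by (metis gr0I less_asym not_le)
        have "psplit (ys@[x]) k'" unfolding psplit_def
        proof (intro conjI allI impI)
          show "0 < k'" by fact
          show "k' < length (ys@[x])" using k'1 k by simp
          fix i j assume "i < k'" "k' \<le> j \<and> j < length (ys@[x])"
          then show "(ys@[x])!i < (ys@[x])!j" using k'1 k'2 k'3 lt[of i j] k
            by (auto simp: nth_append) (metis less_trans not_le)+
        qed
        then show ?thesis by blast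
      qed
    qed
  next
    assume ps: "msplit ys k"
    hence k: "0 < k" "k < ?n" and lt: "\<And>i j. i<k \<Longrightarrow> k \<le> j \<Longrightarrow> j < ?n \<Longrightarrow> ys!i > ys!j"
      unfolding msplit_def by auto
    show ?thesis
    proof (cases "\<forall>i<k. ys!i > x")
      case True
      have "msplit (ys@[x]) k" unfolding msplit_def using k True lt
        by (auto simp: nth_append)
      then show ?thesis by blast
    next
      case F1: False
      then obtain i0 where i0: "i0 < k" "ys!i0 < x" using nx k by (meson linorder_neqE_nat order.strict_trans)
      show ?thesis
      proof (cases "\<forall>i<k. ys!i < x")
        case True
        have "psplit (ys@[x]) ?n" unfolding psplit_def using k True
          by (auto simp: nth_append) (metis lt not_less order.strict_trans)
        then show ?thesis by blast
      next
        case False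
        then obtain i1 where i1: "i1 < k" "ys!i1 > x" using nx k
          by (meson linorder_neqE_nat order.strict_trans)
        define k' where "k' = (LEAST i. i < k \<and> ys!i < x)"
        have k'1: "k' < k" "ys!k' < x" using LeastI[of "\<lambda>i. i < k \<and> ys!i < x" i0] i0 unfolding k'_def by auto
        have k'2: "\<And>i. i < k' \<Longrightarrow> ys!i > x"
          using not_less_Least[of _ "\<lambda>i. i < k \<and> ys!i < x"] nx k'1 k unfolding k'_def
          by (metis linorder_neqE_nat order.strict_trans)
        have k'3: "ys!j < x" if "k' \<le> j" "j < k" for j
        proof (rule ccontr)
          assume "\<not> ys!j < x"
          hence "ys!j > x" using nx that k by (meson linorder_neqE_nat order.strict_trans)
          moreover have "j \<noteq> k'" using k'1 calculation by auto
          ultimately have "hasp p2413 (ys@[x])" unfolding hasp_def p2413_def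
            apply (rule_tac x=k' in exI, rule_tac x=j in exI, rule_tac x=k in exI, rule_tac x="?n" in exI)
            using that k k'1 lt[of k' k] by (auto simp: nth_append)
          then show False using ap by blast
        qed
        have "k' > 0" using k'2 k'3 i1 by (metis gr0I less_asym not_le)
        have "msplit (ys@[x]) k'" unfolding msplit_def
        proof (intro conjI allI impI)
          show "0 < k'" by fact
          show "k' < length (ys@[x])" using k'1 k by simp
          fix i j assume "i < k'" "k' \<le> j \<and> j < length (ys@[x])"
          then show "(ys@[x])!i > (ys@[x])!j" using k'1 k'2 k'3 lt[of i j] k
            by (auto simp: nth_append) (metis less_trans not_le)+
        qed
        then show ?thesis by blast
      qed
    qed
  qed
qed

lemma split_exists:
  "distinct xs \<Longrightarrow> av xs \<Longrightarrow> 2 \<le> length xs \<Longrightarrow> \<exists>k. psplit xs k \<or> msplit xs k"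
proof (induction xs rule: rev_induct)
  case Nil then show ?case by simp
next
  case (snoc x ys)
  show ?case
  proof (cases "length ys = 1")
    case True
    then obtain y where y: "ys = [y]" by (metis One_nat_def length_0_conv length_Suc_conv)
    have "y \<noteq> x" using snoc.prems y by auto
    then have "psplit (ys@[x]) 1 \<or> msplit (ys@[x]) 1" unfolding psplit_def msplit_def y
      by (auto simp: nth_append less_Suc_eq) 
    then show ?thesis by blast
  next
    case False
    then have "2 \<le> length ys" using snoc.prems by simp
    moreover have "av ys" using av_take[OF snoc.prems(2), of "length ys"] by simp
    ultimately obtain k where "psplit ys k \<or> msplit ys k" using snoc by auto
    then show ?thesis using split_step snoc.prems by blast
  qed
qed



lemma des_Cons: "des (x # xs) = des xs + (if xs \<noteq> [] \<and> x > hd xs then 1 else 0)"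
proof -
  let ?D = "\<lambda>ys. {i. i + 1 < length ys \<and> ys ! i > ys ! (i + 1)}"
  have e: "?D (x#xs) = (if xs \<noteq> [] \<and> x > hd xs then {0} else {}) \<union> Suc ` ?D xs"
  proof (rule set_eqI)
    fix i show "i \<in> ?D (x#xs) \<longleftrightarrow> i \<in> (if xs \<noteq> [] \<and> x > hd xs then {0} else {}) \<union> Suc ` ?D xs"
      by (cases i) (auto simp: hd_conv_nth)
  qed
  have f: "finite (?D xs)" by (rule finite_subset[of _ "{..<length xs}"]) auto
  have "card (?D (x#xs)) = card (Suc ` ?D xs) + (if xs \<noteq> [] \<and> x > hd xs then 1 else 0)"
    unfolding e using f by (auto simp: card_insert_if)
  then show ?thesis unfolding des_def by (simp add: card_image)
qed

lemma des_Nil[simp]: "des [] = 0" unfolding des_def by simp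

lemma des_append: "des (xs @ ys) = des xs + des ys + (if xs \<noteq> [] \<and> ys \<noteq> [] \<and> last xs > hd ys then 1 else 0)"
proof (induction xs)
  case Nil then show ?case by simp
next
  case (Cons x xs)
  then show ?case by (cases xs) (auto simp: des_Cons)
qed

lemma des_map:
  assumes "\<forall>a\<in>set xs. \<forall>b\<in>set xs. f a < f b \<longleftrightarrow> a < b"
  shows "des (map f xs) = des xs"
proof -
  have "{i. i + 1 < length (map f xs) \<and> map f xs ! i > map f xs ! (i + 1)}
      = {i. i + 1 < length xs \<and> xs ! i > xs ! (i + 1)}"
    using assms by (auto simp: nth_mem)
  then show ?thesis unfolding des_def by simp
qed

lemma perms_length: "xs \<in> perms n \<Longrightarrow> length xs = n"
  unfolding perms_def by (metis (mono_tags) card_atLeastAtMost diff_Suc_1 distinct_card mem_Collect_eq)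

lemma finite_perms: "finite (perms n)"
proof -
  have "perms n \<subseteq> {xs. set xs \<subseteq> {1..n} \<and> length xs = n}" using perms_length unfolding perms_def by auto
  then show ?thesis using finite_lists_length_eq[of "{1..n}" n] finite_subset by auto
qed

definition psum :: "nat list \<Rightarrow> nat list \<Rightarrow> nat list" where
  "psum a b = a @ map (\<lambda>v. v + length a) b"
definition msum :: "nat list \<Rightarrow> nat list \<Rightarrow> nat list" where
  "msum a b = map (\<lambda>v. v + length b) a @ b"

lemma psum_perms:
  assumes "a \<in> perms k" "b \<in> perms m"
  shows "psum a b \<in> perms (k + m)"
proof -
  have la: "length a = k" using assms perms_length by blast
  have sa: "set a = {1..k}" "distinct a" "set b = {1..m}" "distinct b" using assms unfolding perms_def by auto
  have "(\<lambda>v. v + k) ` {1..m} = {k+1..k+m}"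
    by (auto simp: image_iff intro!: bexI[of _ "_ - k"])
  then show ?thesis unfolding perms_def psum_def la using sa
    by (auto simp: distinct_map inj_on_def)
qed

lemma msum_perms:
  assumes "a \<in> perms k" "b \<in> perms m"
  shows "msum a b \<in> perms (k + m)"
proof -
  have lb: "length b = m" using assms perms_length by blast
  have sa: "set a = {1..k}" "distinct a" "set b = {1..m}" "distinct b" using assms unfolding perms_def by auto
  have "(\<lambda>v. v + m) ` {1..k} = {m+1..k+m}"
    by (auto simp: image_iff intro!: bexI[of _ "_ - m"])
  then show ?thesis unfolding perms_def msum_def lb using sa
    by (auto simp: distinct_map inj_on_def)
qed

lemma av_psum:
  assumes "a \<in> perms k" "av a" "av b" "b \<in> perms m"
  shows "av (psum a b)"
proof -
  have la: "length a = k" using assms perms_length by blast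
  have sa: "set a = {1..k}" "set b = {1..m}" using assms unfolding perms_def by auto
  show ?thesis unfolding psum_def la
    by (rule av_append_less) (use assms sa av_map[of b "\<lambda>v. v + k"] in auto)
qed

lemma av_msum:
  assumes "b \<in> perms m" "av a" "av b" "a \<in> perms k"
  shows "av (msum a b)"
proof -
  have lb: "length b = m" using assms perms_length by blast
  have sb: "set b = {1..m}" "set a = {1..k}" using assms unfolding perms_def by auto
  show ?thesis unfolding msum_def lb
    by (rule av_append_greater) (use assms sb av_map[of a "\<lambda>v. v + m"] in auto)
qed

lemma des_psum:
  assumes "a \<in> perms k" "b \<in> perms m"
  shows "des (psum a b) = des a + des b"
proof -
  have la: "length a = k" using assms perms_length by blast
  have sa: "set a = {1..k}" "set b = {1..m}" using assms unfolding perms_def by auto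
  have "des (map (\<lambda>v. v + k) b) = des b" by (rule des_map) auto
  moreover have "a \<noteq> [] \<Longrightarrow> b \<noteq> [] \<Longrightarrow> last a < hd b + k"
  proof -
    assume "a \<noteq> []" "b \<noteq> []"
    then have "last a \<in> {1..k}" "hd b \<in> {1..m}" using sa last_in_set hd_in_set by metis+
    then show ?thesis by auto
  qed
  ultimately show ?thesis unfolding psum_def des_append la by (auto simp: hd_map)
qed

lemma des_msum:
  assumes "a \<in> perms k" "b \<in> perms m" "k > 0" "m > 0"
  shows "des (msum a b) = des a + des b + 1"
proof -
  have lb: "length b = m" using assms perms_length by blast
  have sa: "set a = {1..k}" "set b = {1..m}" using assms unfolding perms_def by auto
  have ne: "a \<noteq> []" "b \<noteq> []" using sa assms(3,4) by auto
  have "des (map (\<lambda>v. v + m) a) = des a" by (rule des_map) auto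
  moreover have "last a + m > hd b"
  proof -
    have "last a \<in> {1..k}" "hd b \<in> {1..m}" using sa ne last_in_set hd_in_set by metis+
    then show ?thesis by auto
  qed
  ultimately show ?thesis unfolding msum_def des_append lb using ne by (auto simp: last_map)
qed



definition Pd :: "nat \<Rightarrow> nat list set" where "Pd n = {xs \<in> avoid_perms n. \<exists>k. psplit xs k}"
definition Md :: "nat \<Rightarrow> nat list set" where "Md n = {xs \<in> avoid_perms n. \<exists>k. msplit xs k}"
definition Ip :: "nat \<Rightarrow> nat list set" where "Ip n = {xs \<in> avoid_perms n. \<not>(\<exists>k. psplit xs k)}"
definition Im :: "nat \<Rightarrow> nat list set" where "Im n = {xs \<in> avoid_perms n. \<not>(\<exists>k. msplit xs k)}"

lemma take_drop_facts:
  assumes "xs \<in> perms n"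
  shows "set (take k xs) \<union> set (drop k xs) = {1..n}" "set (take k xs) \<inter> set (drop k xs) = {}"
    "distinct (take k xs)" "distinct (drop k xs)"
proof -
  have d: "distinct xs" "set xs = {1..n}" using assms unfolding perms_def by auto
  show "set (take k xs) \<union> set (drop k xs) = {1..n}" using d by (metis append_take_drop_id set_append)
  show "set (take k xs) \<inter> set (drop k xs) = {}" using d by (metis append_take_drop_id distinct_append)
  show "distinct (take k xs)" "distinct (drop k xs)" using d by auto
qed

lemma psplit_lt: assumes "psplit xs k" "t \<in> set (take k xs)" "d \<in> set (drop k xs)" shows "t < d"
proof -
  obtain i where i: "i < length (take k xs)" "t = take k xs ! i" using assms(2) by (auto simp: in_set_conv_nth)
  obtain j where j: "j < length (drop k xs)" "d = drop k xs ! j" using assms(3) by (auto simp: in_set_conv_nth)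
  show ?thesis using assms(1) i j unfolding psplit_def by auto
qed

lemma msplit_gt: assumes "msplit xs k" "t \<in> set (take k xs)" "d \<in> set (drop k xs)" shows "t > d"
proof -
  obtain i where i: "i < length (take k xs)" "t = take k xs ! i" using assms(2) by (auto simp: in_set_conv_nth)
  obtain j where j: "j < length (drop k xs)" "d = drop k xs ! j" using assms(3) by (auto simp: in_set_conv_nth)
  show ?thesis using assms(1) i j unfolding msplit_def by auto
qed

lemma psplit_sets:
  assumes p: "xs \<in> perms n" and s: "psplit xs k"
  shows "set (take k xs) = {1..k}" "set (drop k xs) = {k+1..n}"
proof -
  let ?T = "set (take k xs)" and ?D = "set (drop k xs)"
  have l: "length xs = n" using p perms_length by blast
  have k: "k < n" using s l unfolding psplit_def by auto
  note f = take_drop_facts[OF p, of k]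
  have cT: "card ?T = k" using f(3) k l by (simp add: distinct_card)
  have sub: "?T \<subseteq> {1..k}"
  proof
    fix t assume t: "t \<in> ?T"
    have "{1..t} \<subseteq> ?T"
    proof
      fix w assume w: "w \<in> {1..t}"
      have "t \<in> {1..n}" using t f(1) by blast
      then have "w \<in> ?T \<union> ?D" using w f(1) by auto
      moreover have "w \<notin> ?D" using psplit_lt[OF s t] w by force
      ultimately show "w \<in> ?T" by blast
    qed
    then have "card {1..t} \<le> k" using cT card_mono by (metis finite_set)
    moreover have "t \<ge> 1" using t f(1) by auto
    ultimately show "t \<in> {1..k}" by simp
  qed
  show T: "?T = {1..k}" by (rule card_subset_eq) (use sub cT in auto)
  have "?D = {1..n} - ?T" using f(1,2) by blast
  then show "?D = {k+1..n}" using T by auto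
qed

lemma msplit_sets:
  assumes p: "xs \<in> perms n" and s: "msplit xs k"
  shows "set (drop k xs) = {1..n-k}" "set (take k xs) = {n-k+1..n}"
proof -
  let ?T = "set (take k xs)" and ?D = "set (drop k xs)"
  have l: "length xs = n" using p perms_length by blast
  have k: "k < n" using s l unfolding msplit_def by auto
  note f = take_drop_facts[OF p, of k]
  have cD: "card ?D = n - k" using f(4) k l by (simp add: distinct_card)
  have sub: "?D \<subseteq> {1..n-k}"
  proof
    fix t assume t: "t \<in> ?D"
    have "{1..t} \<subseteq> ?D"
    proof
      fix w assume w: "w \<in> {1..t}"
      have "t \<in> {1..n}" using t f(1) by blast
      then have "w \<in> ?T \<union> ?D" using w f(1) by auto
      moreover have "w \<notin> ?T" using msplit_gt[OF s _ t] w by force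
      ultimately show "w \<in> ?D" by blast
    qed
    then have "card {1..t} \<le> n - k" using cD card_mono by (metis finite_set)
    moreover have "t \<ge> 1" using t f(1) by auto
    ultimately show "t \<in> {1..n-k}" by simp
  qed
  show D: "?D = {1..n-k}" by (rule card_subset_eq) (use sub cD in auto)
  have "?T = {1..n} - ?D" using f(1,2) by blast
  then show "?T = {n-k+1..n}" using D by auto
qed



lemma psum_psplit:
  assumes ab: "a \<in> perms k" "b \<in> perms m" and e: "psum a b = psum a' b'" and k: "0 < k" "k < length a'"
  shows "psplit a' k"
  unfolding psplit_def
proof (intro conjI allI impI)
  show "0 < k" "k < length a'" by fact+
  have la: "length a = k" "length b = m" using ab perms_length by blast+
  have sa: "set a = {1..k}" "set b = {1..m}" using ab unfolding perms_def by auto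
  have len: "length (psum a' b') = k + m"
  proof -
    have "length (psum a b) = k + m" using la unfolding psum_def by simp
    then show ?thesis using e by simp
  qed
  fix i j assume i: "i < k" and j: "k \<le> j \<and> j < length a'"
  have "a' ! i = psum a' b' ! i" using i k unfolding psum_def by (simp add: nth_append)
  also have "\<dots> = psum a b ! i" using e by simp
  also have "\<dots> = a ! i" using i la unfolding psum_def by (simp add: nth_append)
  finally have ai: "a' ! i \<le> k" using sa i la by (metis atLeastAtMost_iff nth_mem)
  have jm: "j - k < m" using j len unfolding psum_def by (simp; linarith)
  have "a' ! j = psum a' b' ! j" using j unfolding psum_def by (simp add: nth_append)
  also have "\<dots> = psum a b ! j" using e by simp
  also have "\<dots> = b ! (j - k) + k" using j la jm unfolding psum_def by (simp add: nth_append)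
  finally have "a' ! j > k" using sa jm la by (metis atLeastAtMost_iff nth_mem less_add_same_cancel2 le_less_trans zero_less_one le_add_diff_inverse2 not_less_eq_eq trans_less_add2 add_pos_nonneg leD leI)
  with ai show "a' ! i < a' ! j" by simp
qed

lemma Pd_decomp:
  assumes \<pi>: "\<pi> \<in> Pd n"
  shows "\<exists>k\<in>{1..<n}. \<exists>a\<in>Ip k. \<exists>b\<in>avoid_perms (n-k). \<pi> = psum a b"
proof -
  have p: "\<pi> \<in> perms n" and av: "av \<pi>" and ex: "\<exists>k. psplit \<pi> k"
    using \<pi> unfolding Pd_def avoid_perms_av by auto
  have l: "length \<pi> = n" using p perms_length by blast
  define k where "k = (LEAST k. psplit \<pi> k)"
  have sk: "psplit \<pi> k" using ex LeastI_ex unfolding k_def by metis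
  have kmin: "\<And>j. j < k \<Longrightarrow> \<not> psplit \<pi> j" using not_less_Least unfolding k_def by blast
  have k: "0 < k" "k < n" using sk l unfolding psplit_def by auto
  note sets = psplit_sets[OF p sk]
  note f = take_drop_facts[OF p, of k]
  define a where "a = take k \<pi>"
  define b where "b = map (\<lambda>v. v - k) (drop k \<pi>)"
  have la: "length a = k" using k l unfolding a_def by simp
  have ap: "a \<in> perms k" using sets f unfolding a_def perms_def by auto
  have aav: "av a" using av_take[OF av] unfolding a_def .
  have anp: "\<not> psplit a j" for j
  proof
    assume sj: "psplit a j"
    have j: "0 < j" "j < k" using sj la unfolding psplit_def by auto
    have "psplit \<pi> j" unfolding psplit_def
    proof (intro conjI allI impI)
      show "0 < j" "j < length \<pi>" using j k l by auto
      fix i q assume i: "i < j" and q: "j \<le> q \<and> q < length \<pi>"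
      show "\<pi> ! i < \<pi> ! q"
      proof (cases "q < k")
        case True
        then show ?thesis using sj i q la unfolding psplit_def a_def by auto
      next
        case False
        have "\<pi> ! i \<in> set (take k \<pi>)" using i j l k by (metis in_set_conv_nth length_take min.absorb4 nth_take order.strict_trans)
        moreover have "\<pi> ! q \<in> set (drop k \<pi>)"
        proof -
          have "\<pi> ! q = drop k \<pi> ! (q - k)" using False q l k by simp
          moreover have "q - k < length (drop k \<pi>)" using q False by (simp; linarith)
          ultimately show ?thesis by (metis nth_mem)
        qed
        ultimately show ?thesis using psplit_lt[OF sk] by blast
      qed
    qed
    then show False using kmin j by blast
  qed
  have injd: "inj_on (\<lambda>v. v - k) (set (drop k \<pi>))" using sets unfolding inj_on_def by auto
  have bp: "b \<in> perms (n-k)" unfolding perms_def b_def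
  proof (intro CollectI conjI)
    show "distinct (map (\<lambda>v. v - k) (drop k \<pi>))" using f(4) injd by (simp add: distinct_map)
    have "(\<lambda>v. v - k) ` {k+1..n} = {1..n-k}"
      by (auto simp: image_iff intro!: bexI[of _ "_ + k"])
    then show "set (map (\<lambda>v. v - k) (drop k \<pi>)) = {1..n-k}" using sets by simp
  qed
  have bav: "av b" unfolding b_def
    by (subst av_map) (use sets av_drop[OF av] in auto)
  have m: "map (\<lambda>v. v + k) b = drop k \<pi>" unfolding b_def map_map o_def
    by (rule map_idI) (use sets in auto)
  have "psum a b = \<pi>" unfolding psum_def la m unfolding a_def by simp
  moreover have "a \<in> Ip k" using ap aav anp unfolding Ip_def avoid_perms_av by auto
  moreover have "b \<in> avoid_perms (n-k)" using bp bav unfolding avoid_perms_av by auto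
  ultimately show ?thesis using k by force
qed

lemma msum_msplit:
  assumes ab: "a \<in> perms k" "b \<in> perms m" and e: "msum a b = msum a' b'" and k: "0 < k" "k < length a'"
  shows "msplit a' k"
  unfolding msplit_def
proof (intro conjI allI impI)
  show "0 < k" "k < length a'" by fact+
  have la: "length a = k" "length b = m" using ab perms_length by blast+
  have sa: "set a = {1..k}" "set b = {1..m}" using ab unfolding perms_def by auto
  have len: "length (msum a' b') = k + m"
  proof -
    have "length (msum a b) = k + m" using la unfolding msum_def by simp
    then show ?thesis using e by simp
  qed
  fix i j assume i: "i < k" and j: "k \<le> j \<and> j < length a'"
  have "a' ! i + length b' = msum a' b' ! i" using i k unfolding msum_def by (simp add: nth_append)
  also have "\<dots> = msum a b ! i" using e by simp
  also have "\<dots> = a ! i + m" using i la unfolding msum_def by (simp add: nth_append)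
  finally have ai: "a' ! i + length b' \<ge> m + 1" using sa i la by (metis atLeastAtMost_iff nth_mem add.commute add_le_cancel_left)
  have jm: "j - k < m" using j len unfolding msum_def by (simp; linarith)
  have "a' ! j + length b' = msum a' b' ! j" using j unfolding msum_def by (simp add: nth_append)
  also have "\<dots> = msum a b ! j" using e by simp
  also have "\<dots> = b ! (j - k)" using j la jm unfolding msum_def by (simp add: nth_append)
  finally have "a' ! j + length b' \<le> m" using sa jm la by (metis atLeastAtMost_iff nth_mem)
  with ai show "a' ! i > a' ! j" by simp
qed

lemma Md_decomp:
  assumes pi: "\<pi> \<in> Md n"
  shows "\<exists>k\<in>{1..<n}. \<exists>a\<in>Im k. \<exists>b\<in>avoid_perms (n-k). \<pi> = msum a b"
proof -
  have p: "\<pi> \<in> perms n" and av: "av \<pi>" and ex: "\<exists>k. msplit \<pi> k"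
    using pi unfolding Md_def avoid_perms_av by auto
  have l: "length \<pi> = n" using p perms_length by blast
  define k where "k = (LEAST k. msplit \<pi> k)"
  have sk: "msplit \<pi> k" using ex LeastI_ex unfolding k_def by metis
  have kmin: "\<And>j. j < k \<Longrightarrow> \<not> msplit \<pi> j" using not_less_Least unfolding k_def by blast
  have k: "0 < k" "k < n" using sk l unfolding msplit_def by auto
  note sets = msplit_sets[OF p sk]
  note f = take_drop_facts[OF p, of k]
  define a where "a = map (\<lambda>v. v - (n-k)) (take k \<pi>)"
  define b where "b = drop k \<pi>"
  have la: "length a = k" using k l unfolding a_def by simp
  have lb: "length b = n - k" using k l unfolding b_def by simp
  have injd: "inj_on (\<lambda>v. v - (n-k)) (set (take k \<pi>))" using sets unfolding inj_on_def by auto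
  have ap: "a \<in> perms k" unfolding perms_def a_def
  proof (intro CollectI conjI)
    show "distinct (map (\<lambda>v. v - (n-k)) (take k \<pi>))" using f(3) injd by (simp add: distinct_map)
    have g: "(\<lambda>v. v - c) ` {c+1..c+k} = {1..k}" for c :: nat
      by (auto simp: image_iff intro!: bexI[of _ "_ + c"])
    have "n = (n-k)+k" using k by simp
    then have "(\<lambda>v. v - (n-k)) ` {n-k+1..n} = {1..k}" using g[of "n-k"] by metis
    then show "set (map (\<lambda>v. v - (n-k)) (take k \<pi>)) = {1..k}" using sets by simp
  qed
  have ai: "\<And>i. i < k \<Longrightarrow> \<pi> ! i = a ! i + (n - k)"
  proof -
    fix i assume i: "i < k"
    have "\<pi> ! i \<in> set (take k \<pi>)" using i l k by (metis in_set_conv_nth length_take min.absorb4 nth_take)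
    then have "\<pi> ! i \<ge> n - k + 1" using sets by auto
    then show "\<pi> ! i = a ! i + (n - k)" using i l k unfolding a_def by simp
  qed
  have aav: "av a" unfolding a_def
    by (subst av_map) (use sets av_take[OF av] in auto)
  have anp: "\<not> msplit a j" for j
  proof
    assume sj: "msplit a j"
    have j: "0 < j" "j < k" using sj la unfolding msplit_def by auto
    have "msplit \<pi> j" unfolding msplit_def
    proof (intro conjI allI impI)
      show "0 < j" "j < length \<pi>" using j k l by auto
      fix i q assume i: "i < j" and q: "j \<le> q \<and> q < length \<pi>"
      show "\<pi> ! i > \<pi> ! q"
      proof (cases "q < k")
        case True
        then show ?thesis using sj i q la ai[of i] ai[of q] j unfolding msplit_def by auto
      next
        case False
        have "\<pi> ! i \<in> set (take k \<pi>)" using i j l k by (metis in_set_conv_nth length_take min.absorb4 nth_take order.strict_trans)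
        moreover have "\<pi> ! q \<in> set (drop k \<pi>)"
        proof -
          have "\<pi> ! q = drop k \<pi> ! (q - k)" using False q l k by simp
          moreover have "q - k < length (drop k \<pi>)" using q False by (simp; linarith)
          ultimately show ?thesis by (metis nth_mem)
        qed
        ultimately show ?thesis using msplit_gt[OF sk] by blast
      qed
    qed
    then show False using kmin j by blast
  qed
  have bp: "b \<in> perms (n-k)" unfolding perms_def b_def using f sets by auto
  have bav: "av b" unfolding b_def using av_drop[OF av] .
  have m: "map (\<lambda>v. v + length b) a = take k \<pi>" unfolding lb a_def map_map o_def
    by (rule map_idI) (use sets in auto)
  have "msum a b = \<pi>" unfolding msum_def m unfolding b_def by simp
  moreover have "a \<in> Im k" using ap aav anp unfolding Im_def avoid_perms_av by auto
  moreover have "b \<in> avoid_perms (n-k)" using bp bav unfolding avoid_perms_av by auto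
  ultimately show ?thesis using k by force
qed



lemma psum_Nil: "psum x [] = x" unfolding psum_def by simp
lemma msum_Nil: "msum x [] = x" unfolding msum_def by simp

lemma finite_avoid: "finite (avoid_perms n)"
  using finite_perms by (rule finite_subset[rotated]) (auto simp: avoid_perms_def)

lemma Ip_sub: "Ip k \<subseteq> avoid_perms k" unfolding Ip_def by auto
lemma Im_sub: "Im k \<subseteq> avoid_perms k" unfolding Im_def by auto
lemma avoid_perms_sub: "avoid_perms k \<subseteq> perms k" unfolding avoid_perms_def by auto

lemma Pd_bij: "bij_betw (case_prod psum) (\<Union>k\<in>{1..<n}. Ip k \<times> avoid_perms (n-k)) (Pd n)"
proof (rule bij_betw_imageI)
  show "inj_on (case_prod psum) (\<Union>k\<in>{1..<n}. Ip k \<times> avoid_perms (n-k))"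
  proof (rule inj_onI, clarify)
    fix a b k a' b' k'
    assume k: "k \<in> {1..<n}" and a: "a \<in> Ip k" and b: "b \<in> avoid_perms (n-k)"
      and k': "k' \<in> {1..<n}" and a': "a' \<in> Ip k'" and b': "b' \<in> avoid_perms (n-k')"
      and e: "psum a b = psum a' b'"
    have ap: "a \<in> perms k" "a' \<in> perms k'" using a a' Ip_sub avoid_perms_sub by blast+
    have bp: "b \<in> perms (n-k)" "b' \<in> perms (n-k')" using b b' avoid_perms_sub by blast+
    have la: "length a = k" "length a' = k'" using ap perms_length by blast+
    have "k = k'"
    proof (rule ccontr)
      assume "k \<noteq> k'"
      then consider "k < k'" | "k' < k" by linarith
      then show False
      proof cases
        case 1
        have "psplit a' k" by (rule psum_psplit[OF ap(1) bp(1) e]) (use 1 k la in auto)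
        then show False using a' unfolding Ip_def by blast
      next
        case 2
        have "psplit a k'" by (rule psum_psplit[OF ap(2) bp(2) e[symmetric]]) (use 2 k' la in auto)
        then show False using a unfolding Ip_def by blast
      qed
    qed
    then have "a = a'" using e la unfolding psum_def by (metis append_eq_append_conv length_map)
    moreover have "b = b'"
    proof -
      have "map (\<lambda>v. v + k) b = map (\<lambda>v. v + k) b'" using e la \<open>k = k'\<close> unfolding psum_def by simp
      moreover have "inj (\<lambda>v::nat. v + k)" by (auto simp: inj_on_def)
      ultimately show ?thesis by (simp add: inj_map_eq_map)
    qed
    ultimately show "a = a' \<and> b = b'" by simp
  qed
  show "case_prod psum ` (\<Union>k\<in>{1..<n}. Ip k \<times> avoid_perms (n-k)) = Pd n"
  proof
    show "case_prod psum ` (\<Union>k\<in>{1..<n}. Ip k \<times> avoid_perms (n-k)) \<subseteq> Pd n"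
    proof clarify
      fix a b k assume k: "k \<in> {1..<n}" and a: "a \<in> Ip k" and b: "b \<in> avoid_perms (n-k)"
      have ap: "a \<in> perms k" "av a" using a unfolding Ip_def avoid_perms_av by auto
      have bp: "b \<in> perms (n-k)" "av b" using b unfolding avoid_perms_av by auto
      have pp: "psum a b \<in> perms n" using psum_perms[OF ap(1) bp(1)] k by simp
      have "av (psum a b)" using av_psum[OF ap(1) ap(2) bp(2) bp(1)] .
      moreover have "psplit (psum a b) k"
        by (rule psum_psplit[OF ap(1) bp(1), of "psum a b" "[]"]) (use k perms_length[OF pp] in \<open>auto simp: psum_Nil\<close>)
      ultimately show "psum a b \<in> Pd n" using pp unfolding Pd_def avoid_perms_av by auto
    qed
    show "Pd n \<subseteq> case_prod psum ` (\<Union>k\<in>{1..<n}. Ip k \<times> avoid_perms (n-k))"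
    proof
      fix x assume "x \<in> Pd n"
      from Pd_decomp[OF this] obtain k a b where "k\<in>{1..<n}" "a\<in>Ip k" "b\<in>avoid_perms (n-k)" "x = psum a b"
        by blast
      then show "x \<in> case_prod psum ` (\<Union>k\<in>{1..<n}. Ip k \<times> avoid_perms (n-k))" by force
    qed
  qed
qed

lemma Md_bij: "bij_betw (case_prod msum) (\<Union>k\<in>{1..<n}. Im k \<times> avoid_perms (n-k)) (Md n)"
proof (rule bij_betw_imageI)
  show "inj_on (case_prod msum) (\<Union>k\<in>{1..<n}. Im k \<times> avoid_perms (n-k))"
  proof (rule inj_onI, clarify)
    fix a b k a' b' k'
    assume k: "k \<in> {1..<n}" and a: "a \<in> Im k" and b: "b \<in> avoid_perms (n-k)"
      and k': "k' \<in> {1..<n}" and a': "a' \<in> Im k'" and b': "b' \<in> avoid_perms (n-k')"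
      and e: "msum a b = msum a' b'"
    have ap: "a \<in> perms k" "a' \<in> perms k'" using a a' Im_sub avoid_perms_sub by blast+
    have bp: "b \<in> perms (n-k)" "b' \<in> perms (n-k')" using b b' avoid_perms_sub by blast+
    have la: "length a = k" "length a' = k'" using ap perms_length by blast+
    have lb: "length b = n-k" "length b' = n-k'" using bp perms_length by blast+
    have "k = k'"
    proof (rule ccontr)
      assume "k \<noteq> k'"
      then consider "k < k'" | "k' < k" by linarith
      then show False
      proof cases
        case 1
        have "msplit a' k" by (rule msum_msplit[OF ap(1) bp(1) e]) (use 1 k la in auto)
        then show False using a' unfolding Im_def by blast
      next
        case 2
        have "msplit a k'" by (rule msum_msplit[OF ap(2) bp(2) e[symmetric]]) (use 2 k' la in auto)
        then show False using a unfolding Im_def by blast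
      qed
    qed
    then have "b = b'" using e la lb unfolding msum_def by (metis append_eq_append_conv length_map)
    moreover have "a = a'"
    proof -
      have "map (\<lambda>v. v + (n-k)) a = map (\<lambda>v. v + (n-k)) a'" using e lb \<open>k = k'\<close> unfolding msum_def by simp
      moreover have "inj (\<lambda>v::nat. v + (n-k))" by (auto simp: inj_on_def)
      ultimately show ?thesis by (simp add: inj_map_eq_map)
    qed
    ultimately show "a = a' \<and> b = b'" by simp
  qed
  show "case_prod msum ` (\<Union>k\<in>{1..<n}. Im k \<times> avoid_perms (n-k)) = Md n"
  proof
    show "case_prod msum ` (\<Union>k\<in>{1..<n}. Im k \<times> avoid_perms (n-k)) \<subseteq> Md n"
    proof clarify
      fix a b k assume k: "k \<in> {1..<n}" and a: "a \<in> Im k" and b: "b \<in> avoid_perms (n-k)"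
      have ap: "a \<in> perms k" "av a" using a unfolding Im_def avoid_perms_av by auto
      have bp: "b \<in> perms (n-k)" "av b" using b unfolding avoid_perms_av by auto
      have pp: "msum a b \<in> perms n" using msum_perms[OF ap(1) bp(1)] k by simp
      have "av (msum a b)" using av_msum[OF bp(1) ap(2) bp(2) ap(1)] .
      moreover have "msplit (msum a b) k"
        by (rule msum_msplit[OF ap(1) bp(1), of "msum a b" "[]"]) (use k perms_length[OF pp] in \<open>auto simp: msum_Nil\<close>)
      ultimately show "msum a b \<in> Md n" using pp unfolding Md_def avoid_perms_av by auto
    qed
    show "Md n \<subseteq> case_prod msum ` (\<Union>k\<in>{1..<n}. Im k \<times> avoid_perms (n-k))"
    proof
      fix x assume "x \<in> Md n"
      from Md_decomp[OF this] obtain k a b where "k\<in>{1..<n}" "a\<in>Im k" "b\<in>avoid_perms (n-k)" "x = msum a b"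
        by blast
      then show "x \<in> case_prod msum ` (\<Union>k\<in>{1..<n}. Im k \<times> avoid_perms (n-k))" by force
    qed
  qed
qed



definition Pp :: "nat \<Rightarrow> int poly" where "Pp n = (\<Sum>x\<in>Pd n. monom 1 (des x))"
definition Mp :: "nat \<Rightarrow> int poly" where "Mp n = (\<Sum>x\<in>Md n. monom 1 (des x))"
definition Qp :: "nat \<Rightarrow> int poly" where "Qp n = (\<Sum>x\<in>Ip n. monom 1 (des x))"
definition Rp :: "nat \<Rightarrow> int poly" where "Rp n = (\<Sum>x\<in>Im n. monom 1 (des x))"

lemma Qp_eq: "Qp k = S k - Pp k"
proof -
  have "avoid_perms k = Pd k \<union> Ip k" "Pd k \<inter> Ip k = {}" unfolding Pd_def Ip_def by auto
  moreover have "finite (Pd k)" "finite (Ip k)" using finite_avoid by (auto simp: Pd_def Ip_def)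
  ultimately have "S k = Pp k + Qp k" unfolding S_def Pp_def Qp_def by (simp add: sum.union_disjoint)
  then show ?thesis by simp
qed

lemma Rp_eq: "Rp k = S k - Mp k"
proof -
  have "avoid_perms k = Md k \<union> Im k" "Md k \<inter> Im k = {}" unfolding Md_def Im_def by auto
  moreover have "finite (Md k)" "finite (Im k)" using finite_avoid by (auto simp: Md_def Im_def)
  ultimately have "S k = Mp k + Rp k" unfolding S_def Mp_def Rp_def by (simp add: sum.union_disjoint)
  then show ?thesis by simp
qed

lemma not_both: assumes p: "psplit xs k" and m: "msplit xs k'" shows False
proof -
  have a: "0 < k" "k < length xs" "\<And>j. k \<le> j \<Longrightarrow> j < length xs \<Longrightarrow> xs!0 < xs!j"
    using p unfolding psplit_def by auto
  have b: "0 < k'" "k' < length xs" "\<And>j. k' \<le> j \<Longrightarrow> j < length xs \<Longrightarrow> xs!0 > xs!j"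
    using m unfolding msplit_def by auto
  have "xs!0 < xs!(max k k')" "xs!0 > xs!(max k k')" using a b by auto
  then show False by simp
qed

lemma S_split: assumes "n \<ge> 2" shows "S n = Pp n + Mp n"
proof -
  have "avoid_perms n = Pd n \<union> Md n"
  proof
    show "avoid_perms n \<subseteq> Pd n \<union> Md n"
    proof
      fix x assume x: "x \<in> avoid_perms n"
      then have "distinct x" "av x" "length x = n" unfolding avoid_perms_av perms_def
        using perms_length by (auto simp: perms_def)
      then obtain k where "psplit x k \<or> msplit x k" using split_exists assms by metis
      then show "x \<in> Pd n \<union> Md n" using x unfolding Pd_def Md_def by auto
    qed
  qed (auto simp: Pd_def Md_def)
  moreover have "Pd n \<inter> Md n = {}" unfolding Pd_def Md_def using not_both by blast
  moreover have "finite (Pd n)" "finite (Md n)" using finite_avoid by (auto simp: Pd_def Md_def)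
  ultimately show ?thesis unfolding S_def Pp_def Mp_def by (simp add: sum.union_disjoint)
qed

lemma S_1: "S 1 = 1"
proof -
  have "perms 1 = {[1]}"
  proof
    show "perms 1 \<subseteq> {[1]}"
    proof
      fix x assume x: "x \<in> perms 1"
      then have "length x = 1" "set x = {1}" using perms_length unfolding perms_def by auto
      then show "x \<in> {[1]}" by (metis One_nat_def length_0_conv length_Suc_conv list.set(2) list.simps(15) singletonD singletonI insert_not_empty empty_set insert_absorb2) 
    qed
  qed (auto simp: perms_def)
  moreover have "av [1]" unfolding av_def hasp_def by auto
  ultimately have "avoid_perms 1 = {[1]}" unfolding avoid_perms_av by auto
  moreover have "des [1] = 0" unfolding des_def by simp
  ultimately show ?thesis unfolding S_def by simp
qed

lemma Pp_rec: "Pp n = (\<Sum>k=1..<n. Qp k * S (n-k))"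
proof -
  let ?U = "\<lambda>k. Ip k \<times> avoid_perms (n-k)"
  have fin: "\<And>k. finite (?U k)" using finite_avoid finite_subset[OF Ip_sub] by blast
  have "Pp n = (\<Sum>x\<in>(\<Union>k\<in>{1..<n}. ?U k). monom 1 (des (case_prod psum x)))"
    unfolding Pp_def by (rule sum.reindex_bij_betw[OF Pd_bij, symmetric])
  also have "\<dots> = (\<Sum>k\<in>{1..<n}. \<Sum>x\<in>?U k. monom 1 (des (case_prod psum x)))"
  proof (rule sum.UNION_disjoint)
    show "\<forall>i\<in>{1..<n}. \<forall>j\<in>{1..<n}. i \<noteq> j \<longrightarrow> ?U i \<inter> ?U j = {}"
    proof (intro ballI impI)
      fix i j :: nat assume "i \<noteq> j"
      have "Ip i \<inter> Ip j = {}"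
      proof (rule equals0I)
        fix x assume "x \<in> Ip i \<inter> Ip j"
        then have "x \<in> perms i" "x \<in> perms j" using Ip_sub avoid_perms_sub by blast+
        then show False using perms_length \<open>i \<noteq> j\<close> by blast
      qed
      then show "?U i \<inter> ?U j = {}" by blast
    qed
  qed (use fin in auto)
  also have "\<dots> = (\<Sum>k\<in>{1..<n}. \<Sum>a\<in>Ip k. \<Sum>b\<in>avoid_perms (n-k). monom 1 (des a) * monom 1 (des b))"
  proof (rule sum.cong[OF refl])
    fix k assume k: "k \<in> {1..<n}"
    have "(\<Sum>x\<in>?U k. monom 1 (des (case_prod psum x)) :: int poly) = (\<Sum>a\<in>Ip k. \<Sum>b\<in>avoid_perms (n-k). monom 1 (des (psum a b)))"
      by (simp add: sum.cartesian_product split_def)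
    also have "\<dots> = (\<Sum>a\<in>Ip k. \<Sum>b\<in>avoid_perms (n-k). monom 1 (des a) * monom 1 (des b))"
    proof (rule sum.cong[OF refl], rule sum.cong[OF refl])
      fix a b assume "a \<in> Ip k" "b \<in> avoid_perms (n-k)"
      then have "a \<in> perms k" "b \<in> perms (n-k)" using Ip_sub avoid_perms_sub by blast+
      then show "monom 1 (des (psum a b)) = (monom 1 (des a) * monom 1 (des b) :: int poly)"
        by (simp add: des_psum mult_monom)
    qed
    finally show "(\<Sum>x\<in>?U k. monom 1 (des (case_prod psum x)) :: int poly) = (\<Sum>a\<in>Ip k. \<Sum>b\<in>avoid_perms (n-k). monom 1 (des a) * monom 1 (des b))" .
  qed
  also have "\<dots> = (\<Sum>k=1..<n. Qp k * S (n-k))"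
    unfolding Qp_def S_def by (simp add: sum_product)
  finally show ?thesis .
qed

lemma monom_shift: "monom (1::int) (a + b + 1) = [:0,1:] * (monom 1 a * monom 1 b)"
proof -
  have "monom (1::int) 1 = [:0,1:]" by (simp add: monom_Suc)
  then show ?thesis by (metis mult_monom mult.commute mult_1)
qed

lemma Mp_rec: "Mp n = [:0,1:] * (\<Sum>k=1..<n. Rp k * S (n-k))"
proof -
  let ?U = "\<lambda>k. Im k \<times> avoid_perms (n-k)"
  have fin: "\<And>k. finite (?U k)" using finite_avoid finite_subset[OF Im_sub] by blast
  have "Mp n = (\<Sum>x\<in>(\<Union>k\<in>{1..<n}. ?U k). monom 1 (des (case_prod msum x)))"
    unfolding Mp_def by (rule sum.reindex_bij_betw[OF Md_bij, symmetric])
  also have "\<dots> = (\<Sum>k\<in>{1..<n}. \<Sum>x\<in>?U k. monom 1 (des (case_prod msum x)))"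
  proof (rule sum.UNION_disjoint)
    show "\<forall>i\<in>{1..<n}. \<forall>j\<in>{1..<n}. i \<noteq> j \<longrightarrow> ?U i \<inter> ?U j = {}"
    proof (intro ballI impI)
      fix i j :: nat assume "i \<noteq> j"
      have "Im i \<inter> Im j = {}"
      proof (rule equals0I)
        fix x assume "x \<in> Im i \<inter> Im j"
        then have "x \<in> perms i" "x \<in> perms j" using Im_sub avoid_perms_sub by blast+
        then show False using perms_length \<open>i \<noteq> j\<close> by blast
      qed
      then show "?U i \<inter> ?U j = {}" by blast
    qed
  qed (use fin in auto)
  also have "\<dots> = (\<Sum>k\<in>{1..<n}. \<Sum>a\<in>Im k. \<Sum>b\<in>avoid_perms (n-k). [:0,1:] * (monom 1 (des a) * monom 1 (des b)))"
  proof (rule sum.cong[OF refl])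
    fix k assume k: "k \<in> {1..<n}"
    have "(\<Sum>x\<in>?U k. monom 1 (des (case_prod msum x)) :: int poly) = (\<Sum>a\<in>Im k. \<Sum>b\<in>avoid_perms (n-k). monom 1 (des (msum a b)))"
      by (simp add: sum.cartesian_product split_def)
    also have "\<dots> = (\<Sum>a\<in>Im k. \<Sum>b\<in>avoid_perms (n-k). [:0,1:] * (monom 1 (des a) * monom 1 (des b)))"
    proof (intro sum.cong refl)
      fix a b assume "a \<in> Im k" "b \<in> avoid_perms (n-k)"
      then have "a \<in> perms k" "b \<in> perms (n-k)" using Im_sub avoid_perms_sub by blast+
      moreover have "0 < k" "0 < n - k" using k by auto
      ultimately have "des (msum a b) = des a + des b + 1" by (rule des_msum)
      then show "monom 1 (des (msum a b)) = ([:0,1:] * (monom 1 (des a) * monom 1 (des b)) :: int poly)"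
        by (simp only: monom_shift)
    qed
    finally show "(\<Sum>x\<in>?U k. monom 1 (des (case_prod msum x)) :: int poly) = (\<Sum>a\<in>Im k. \<Sum>b\<in>avoid_perms (n-k). [:0,1:] * (monom 1 (des a) * monom 1 (des b)))" .
  qed
  also have "\<dots> = [:0,1:] * (\<Sum>k=1..<n. Rp k * S (n-k))"
    unfolding Rp_def S_def by (simp only: sum_distrib_left[symmetric] sum_distrib_right[symmetric] sum_product[symmetric])
  finally show ?thesis .
qed





lemma mult_nth0:
  fixes f g :: "'a::comm_ring_1 fps"
  assumes "f $ 0 = 0" "g $ 0 = 0"
  shows "(f * g) $ n = (\<Sum>k=1..<n. f$k * g$(n-k))"
proof (cases "n = 0")
  case True then show ?thesis using assms by (simp add: fps_mult_nth)
next
  case False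
  have e: "{0..n} = insert 0 (insert n {1..<n})" using False by auto
  have "(f * g) $ n = (\<Sum>i\<in>{0..n}. f$i * g$(n-i))" by (simp add: fps_mult_nth)
  also have "\<dots> = (\<Sum>k=1..<n. f$k * g$(n-k))" unfolding e using False assms by simp
  finally show ?thesis .
qed

definition Pf :: "int poly fps" where "Pf = Abs_fps Pp"
definition Mf :: "int poly fps" where "Mf = Abs_fps Mp"

lemma Pp0: "Pp 0 = 0" "Pp 1 = 0" using Pp_rec[of 0] Pp_rec[of 1] by auto
lemma Mp0: "Mp 0 = 0" "Mp 1 = 0" using Mp_rec[of 0] Mp_rec[of 1] by auto

lemma Sgf_nth: "Sgf $ n = (if n = 0 then 0 else S n)" unfolding Sgf_def by simp

lemma Q_fps: "(fps_X + Mf) $ k = (if k = 0 then 0 else Qp k)"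
proof -
  consider "k = 0" | "k = 1" | "k \<ge> 2" by linarith
  then show ?thesis
  proof cases
    case 1 then show ?thesis using Mp0 by (simp add: Mf_def)
  next
    case 2 then show ?thesis using Mp0 Pp0 S_1 by (simp add: Mf_def Qp_eq)
  next
    case 3 then show ?thesis using S_split[OF 3] by (simp add: Mf_def Qp_eq)
  qed
qed

lemma R_fps: "(fps_X + Pf) $ k = (if k = 0 then 0 else Rp k)"
proof -
  consider "k = 0" | "k = 1" | "k \<ge> 2" by linarith
  then show ?thesis
  proof cases
    case 1 then show ?thesis using Pp0 by (simp add: Pf_def)
  next
    case 2 then show ?thesis using Mp0 Pp0 S_1 by (simp add: Pf_def Rp_eq)
  next
    case 3 then show ?thesis using S_split[OF 3] by (simp add: Pf_def Rp_eq)
  qed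
qed

lemma E1: "Pf = (fps_X + Mf) * Sgf"
proof (rule fps_ext)
  fix n
  have "((fps_X + Mf) * Sgf) $ n = (\<Sum>k=1..<n. (fps_X + Mf)$k * Sgf$(n-k))"
    by (rule mult_nth0) (auto simp: Q_fps Sgf_nth Mf_def Mp0)
  also have "\<dots> = (\<Sum>k=1..<n. Qp k * S (n-k))"
    by (rule sum.cong[OF refl]) (simp only: Q_fps Sgf_nth, simp)
  finally show "Pf $ n = ((fps_X + Mf) * Sgf) $ n" unfolding Pf_def using Pp_rec by simp
qed

lemma E2: "Mf = fps_const [:0,1:] * ((fps_X + Pf) * Sgf)"
proof (rule fps_ext)
  fix n
  have "((fps_X + Pf) * Sgf) $ n = (\<Sum>k=1..<n. (fps_X + Pf)$k * Sgf$(n-k))"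
    by (rule mult_nth0) (auto simp: R_fps Sgf_nth Pf_def Pp0)
  also have "\<dots> = (\<Sum>k=1..<n. Rp k * S (n-k))"
    by (rule sum.cong[OF refl]) (simp only: R_fps Sgf_nth, simp)
  finally show "Mf $ n = (fps_const [:0,1:] * ((fps_X + Pf) * Sgf)) $ n" unfolding Mf_def using Mp_rec by simp
qed

lemma E3: "Sgf = fps_X + Pf + Mf"
proof (rule fps_ext)
  fix n :: nat
  consider "n = 0" | "n = 1" | "n \<ge> 2" by linarith
  then show "Sgf $ n = (fps_X + Pf + Mf) $ n"
  proof cases
    case 1 then show ?thesis using Pp0 Mp0 by (simp add: Pf_def Mf_def Sgf_nth)
  next
    case 2 then show ?thesis using Pp0 Mp0 S_1 by (simp add: Pf_def Mf_def Sgf_nth)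
  next
    case 3 then show ?thesis using S_split[OF 3] by (simp add: Pf_def Mf_def Sgf_nth)
  qed
qed

lemma gf_eq: "Sgf = fps_X + fps_const [:1, 1:] * fps_X * Sgf + fps_const [:0, 1:] * fps_X * Sgf ^ 2
             + fps_const [:0, 1:] * Sgf ^ 3"
proof -
  define t :: "int poly fps" where "t = fps_const [:0,1:]"
  have c: "fps_const [:1,1:] = 1 + t" unfolding t_def
    by (metis fps_const_add fps_const_1_eq_1 one_pCons add_pCons add.right_neutral add_0 pCons_0_0)
  note e1 = E1 and e2 = E2[folded t_def] and e3 = E3
  have g: "Sgf = fps_X + (1 + t) * fps_X * Sgf + t * fps_X * Sgf ^ 2 + t * Sgf ^ 3"
    using e1 e2 e3 by algebra
  show ?thesis unfolding c t_def[symmetric] using g .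
qed





lemma sq_nth: "(Sgf^2) $ m = (\<Sum>k=1..<m. S k * S (m-k))"
proof -
  have "(Sgf^2) $ m = (Sgf * Sgf) $ m" by (simp add: power2_eq_square)
  also have "\<dots> = (\<Sum>k=1..<m. Sgf$k * Sgf$(m-k))" by (rule mult_nth0) (simp_all add: Sgf_nth)
  also have "\<dots> = (\<Sum>k=1..<m. S k * S (m-k))" by (rule sum.cong[OF refl]) (simp add: Sgf_nth)
  finally show ?thesis .
qed

lemma cube_nth: "(Sgf^3) $ n = (\<Sum>j=1..<n. S j * (\<Sum>i=1..<n-j. S i * S (n-j-i)))"
proof -
  have "(Sgf^3) $ n = (Sgf * Sgf^2) $ n" by (simp add: power3_eq_cube power2_eq_square mult.assoc)
  also have "\<dots> = (\<Sum>j=1..<n. Sgf$j * (Sgf^2)$(n-j))" by (rule mult_nth0) (simp_all add: Sgf_nth sq_nth)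
  also have "\<dots> = (\<Sum>j=1..<n. S j * (\<Sum>i=1..<n-j. S i * S (n-j-i)))"
    by (rule sum.cong[OF refl]) (simp add: Sgf_nth sq_nth)
  finally show ?thesis .
qed

theorem theorem5p10:
  shows "(\<forall>n\<ge>2. S n = [:1, 1:] * S (n - 1)
            + [:0, 1:] * (\<Sum>j=1..n-2. S j * (S (n - j - 1)
                 + (\<Sum>i=1..n-j-1. S i * S (n - j - i)))))
    \<and> Sgf = fps_X + fps_const [:1, 1:] * fps_X * Sgf + fps_const [:0, 1:] * fps_X * Sgf ^ 2
             + fps_const [:0, 1:] * Sgf ^ 3"
proof
  show "\<forall>n\<ge>2. S n = [:1, 1:] * S (n - 1)
            + [:0, 1:] * (\<Sum>j=1..n-2. S j * (S (n - j - 1)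
                 + (\<Sum>i=1..n-j-1. S i * S (n - j - i))))"
  proof (intro allI impI)
    fix n :: nat assume n: "2 \<le> n"
    have h: "Sgf $ n = (fps_X + fps_const [:1, 1:] * fps_X * Sgf + fps_const [:0, 1:] * fps_X * Sgf ^ 2
             + fps_const [:0, 1:] * Sgf ^ 3) $ n"
      using arg_cong[of _ _ "\<lambda>F. F $ n", OF gf_eq] .
    have h2: "S n = [:1,1:] * S (n-1) + [:0,1:] * (Sgf^2) $ (n-1) + [:0,1:] * (Sgf^3) $ n"
      using h n by (simp add: mult.assoc Sgf_nth)
    have A: "(Sgf^2) $ (n-1) = (\<Sum>j=1..n-2. S j * S (n - j - 1))"
    proof -
      have "{1..<n-1} = {1..n-2}" using n by auto
      then show ?thesis unfolding sq_nth by (simp add: diff_commute)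
    qed
    have B: "(Sgf^3) $ n = (\<Sum>j=1..n-2. S j * (\<Sum>i=1..n-j-1. S i * S (n - j - i)))"
    proof -
      have e: "{1..<n} = insert (n-1) {1..n-2}" using n by auto
      have "(Sgf^3) $ n = (\<Sum>j\<in>insert (n-1) {1..n-2}. S j * (\<Sum>i=1..<n-j. S i * S (n-j-i)))"
        unfolding cube_nth e ..
      also have "\<dots> = (\<Sum>j=1..n-2. S j * (\<Sum>i=1..<n-j. S i * S (n-j-i)))"
      proof -
        have nin: "n-1 \<notin> {1..n-2}" using n by auto
        have z: "n - (n-1) = 1" using n by auto
        show ?thesis by (simp only: sum.insert[OF finite_atLeastAtMost nin] z) simp
      qed
      also have "\<dots> = (\<Sum>j=1..n-2. S j * (\<Sum>i=1..n-j-1. S i * S (n - j - i)))"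
      proof (rule sum.cong[OF refl])
        fix j assume "j \<in> {1..n-2}"
        then have "{1..<n-j} = {1..n-j-1}" by auto
        then show "S j * (\<Sum>i=1..<n-j. S i * S (n-j-i)) = S j * (\<Sum>i=1..n-j-1. S i * S (n - j - i))" by simp
      qed
      finally show ?thesis .
    qed
    show "S n = [:1, 1:] * S (n - 1)
            + [:0, 1:] * (\<Sum>j=1..n-2. S j * (S (n - j - 1)
                 + (\<Sum>i=1..n-j-1. S i * S (n - j - i))))"
      unfolding h2 A B by (simp add: distrib_left sum.distrib)
  qed
  show "Sgf = fps_X + fps_const [:1, 1:] * fps_X * Sgf + fps_const [:0, 1:] * fps_X * Sgf ^ 2
             + fps_const [:0, 1:] * Sgf ^ 3" by (rule gf_eq)
qed


end
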